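(* Let $n\ge 0$ and let $R$ be a rook placement in the double staircase $2\delta_n$. Then the word $d(R)$ is a Dyck path of length $2n+2$, i.e. every prefix of $d(R)$ contains at least as many steps $\nearrow$ as steps $\searrow$, and $d(R)$ contains $n+1$ steps of each kind.
   Context: The double staircase $2\delta_n$ is the Young diagram (French convention: rows drawn bottom to top, left-justified) with row lengths $2n,2n-2,\dots,2$ from bottom to top; its columns are numbered $1,\dots,2n$ from left to right. A rook placement of size $n$ is a set of dots placed in cells of $2\delta_n$ such that each row contains exactly one dot and each column contains at most one dot. For such $R$, $d(R)$ is the word $w_1\cdots w_{2n+2}$ over $\{\nearrow,\searrow\}$ defined by: $w_1=\nearrow$, $w_{2n+2}=\searrow$, and for $2\le i\le 2n+1$, $w_i=\nearrow$ if column $i-1$ of $R$ contains a dot and $w_i=\searrow$ otherwise. A Dyck path of length $2m$ is a lattice path from $(0,0)$ to $(2m,0)$ with steps $\nearrow=(1,1)$ and $\searrow=(1,-1)$ never going below the $x$-axis (identified with the word of its steps). *)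

theory Defs
  imports Main
begin

(* Cells are pairs (row, column), rows numbered 1..n from bottom to top,
   columns 1..2n from left to right (French convention).
   Row i (1 <= i <= n) has length 2n - 2(i-1). *)
definition double_staircase :: "nat \<Rightarrow> (nat \<times> nat) set" where
  "double_staircase n = {(i, c). 1 \<le> i \<and> i \<le> n \<and> 1 \<le> c \<and> c \<le> 2 * n + 2 - 2 * i}"

definition rook_placement :: "nat \<Rightarrow> (nat \<times> nat) set \<Rightarrow> bool" where
  "rook_placement n R \<longleftrightarrow>
     R \<subseteq> double_staircase n \<and>
     (\<forall>i\<in>{1..n}. \<exists>!c. (i, c) \<in> R) \<and>
     (\<forall>c\<in>{1..2*n}. \<forall>i j. (i, c) \<in> R \<and> (j, c) \<in> R \<longrightarrow> i = j)"

(* Steps: True = up step (1,1), False = down step (1,-1). *)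
type_synonym step = bool

definition dword :: "nat \<Rightarrow> (nat \<times> nat) set \<Rightarrow> step list" where
  "dword n R = [True] @ map (\<lambda>c. \<exists>i. (i, c) \<in> R) [1..<2*n+1] @ [False]"

definition num_up :: "step list \<Rightarrow> nat" where
  "num_up w = length (filter (\<lambda>s. s) w)"

definition num_down :: "step list \<Rightarrow> nat" where
  "num_down w = length (filter (\<lambda>s. \<not> s) w)"

definition dyck_path :: "nat \<Rightarrow> step list \<Rightarrow> bool" where
  "dyck_path m w \<longleftrightarrow> length w = 2 * m \<and>
     (\<forall>k \<le> length w. num_down (take k w) \<le> num_up (take k w)) \<and>
     num_up w = num_down w"

end

theory Submission
  imports Defs
begin

lemma len_filter_upt: "length (filter P [a..<b]) = card {x\<in>{a..<b}. P x}"
proof -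
  have "length (filter P [a..<b]) = card (set (filter P [a..<b]))"
    using distinct_card[OF distinct_filter[OF distinct_upt], of P a b] by simp
  moreover have "set (filter P [a..<b]) = {x\<in>{a..<b}. P x}" by auto
  ultimately show ?thesis by simp
qed

theorem mainTheorem1:
  fixes n :: nat and R :: "(nat \<times> nat) set"
  assumes "rook_placement n R"
  shows "dyck_path (n + 1) (dword n R) \<and>
         (\<forall>k \<le> length (dword n R). num_down (take k (dword n R)) \<le> num_up (take k (dword n R))) \<and>
         num_up (dword n R) = n + 1 \<and> num_down (dword n R) = n + 1"
proof -
  have sub: "R \<subseteq> double_staircase n"
    and row: "\<And>i. i\<in>{1..n} \<Longrightarrow> \<exists>!c. (i, c) \<in> R"
    and col: "\<And>c i j. c\<in>{1..2*n} \<Longrightarrow> (i, c) \<in> R \<Longrightarrow> (j, c) \<in> R \<Longrightarrow> i = j"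
    using assms unfolding rook_placement_def by blast+
  define f where "f i = (THE c. (i,c)\<in>R)" for i
  define P where "P c = (\<exists>i. (i, c) \<in> R)" for c
  define C where "C = {c. P c}"
  have inR: "(i, f i) \<in> R" if "i\<in>{1..n}" for i
    unfolding f_def using theI'[OF row[OF that]] .
  have inS: "1 \<le> i \<and> i \<le> n \<and> 1 \<le> c \<and> c \<le> 2 * n + 2 - 2 * i" if "(i,c)\<in>R" for i c
    using sub that unfolding double_staircase_def by blast
  have feq: "c = f i" if "(i,c)\<in>R" for i c
  proof -
    have "i\<in>{1..n}" using inS[OF that] by simp
    then show ?thesis unfolding f_def using the1_equality[OF row that] by simp
  qed
  have Cim: "C = f ` {1..n}"
  proof
    show "C \<subseteq> f ` {1..n}" unfolding C_def P_def
      using feq inS by fastforce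
    show "f ` {1..n} \<subseteq> C" unfolding C_def P_def using inR by blast
  qed
  have inj: "inj_on f {1..n}"
  proof (rule inj_onI)
    fix i j assume i: "i\<in>{1..n}" and j: "j\<in>{1..n}" and e: "f i = f j"
    have "(i, f i)\<in>R" "(j, f i)\<in>R" using inR[OF i] inR[OF j] e by auto
    moreover have "f i \<in> {1..2*n}" using inS[OF \<open>(i, f i)\<in>R\<close>] by auto
    ultimately show "i = j" using col by blast
  qed
  have cardC: "card C = n" using Cim inj card_image by fastforce
  have Csub: "C \<subseteq> {1..2*n}" unfolding C_def P_def using inS by fastforce
  have finC: "finite C" using Csub finite_subset by blast
  have key: "m + 1 \<le> 2 * card (C \<inter> {1..m}) + 2" if "m \<le> 2*n" for m
  proof -
    have sub2: "{i\<in>{1..n}. m < f i} \<subseteq> {1..(2*n+1-m) div 2}"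
    proof
      fix i assume "i \<in> {i\<in>{1..n}. m < f i}"
      then have i: "i\<in>{1..n}" "m < f i" by auto
      have "f i \<le> 2 * n + 2 - 2 * i" using inS[OF inR[OF i(1)]] by simp
      then have "2*i \<le> 2*n+1-m" using i by auto
      then show "i \<in> {1..(2*n+1-m) div 2}" using i by auto
    qed
    then have "card {i\<in>{1..n}. m < f i} \<le> card {1..(2*n+1-m) div 2}"
      by (intro card_mono) auto
    then have "card (f ` {i\<in>{1..n}. m < f i}) \<le> (2*n+1-m) div 2"
      using card_image_le[of "{i\<in>{1..n}. m < f i}" f] by simp
    moreover have "card {c\<in>C. m < c} \<le> card (f ` {i\<in>{1..n}. m < f i})"
      using Cim by (intro card_mono) auto
    ultimately have b: "card {c\<in>C. m < c} \<le> (2*n+1-m) div 2" by linarith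
    have "C = (C \<inter> {1..m}) \<union> {c\<in>C. m < c}" using Csub by auto
    then have "card C \<le> card (C \<inter> {1..m}) + card {c\<in>C. m < c}"
      by (metis card_Un_le)
    moreover have "2 * ((2*n+1-m) div 2) \<le> 2*n+1-m" by simp
    ultimately show ?thesis using b cardC that by linarith
  qed
  have cnt_up: "length (filter (\<lambda>s. s) (map P [1..<k])) = card (C \<inter> {1..<k})" for k
  proof -
    have "length (filter (\<lambda>s. s) (map P [1..<k])) = length (filter P [1..<k])"
      by (simp add: filter_map comp_def)
    also have "\<dots> = card (C \<inter> {1..<k})" unfolding len_filter_upt C_def
      by (rule arg_cong[where f=card]) auto
    finally show ?thesis .
  qed
  have cnt_dn: "length (filter Not (map P [1..<k])) = (k - 1) - card (C \<inter> {1..<k})" for k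
  proof -
    have "length (filter Not (map P [1..<k])) + length (filter (\<lambda>s. s) (map P [1..<k])) = k - 1"
      using sum_length_filter_compl[of Not "map P [1..<k]"] by simp
    then show ?thesis using cnt_up by simp
  qed
  have dw: "dword n R = [True] @ map P [1..<2*n+1] @ [False]"
    unfolding dword_def P_def by simp
  have up: "num_up (dword n R) = n + 1"
  proof -
    have "num_up (dword n R) = 1 + card (C \<inter> {1..<2*n+1})"
      unfolding dw num_up_def using cnt_up[of "2*n+1"] by (simp del: upt_Suc)
    moreover have "C \<inter> {1..<2*n+1} = C" using Csub by auto
    ultimately show ?thesis using cardC by simp
  qed
  have dn: "num_down (dword n R) = n + 1"
  proof -
    have "num_down (dword n R) = (2*n+1-1) - card (C \<inter> {1..<2*n+1}) + 1"
      unfolding dw num_down_def using cnt_dn[of "2*n+1"] by (simp add: comp_def del: upt_Suc)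
    moreover have "C \<inter> {1..<2*n+1} = C" using Csub by auto
    ultimately show ?thesis using cardC by simp
  qed
  have pref: "\<forall>k \<le> length (dword n R). num_down (take k (dword n R)) \<le> num_up (take k (dword n R))"
  proof (intro allI impI)
    fix k assume "k \<le> length (dword n R)"
    then have kl: "k \<le> 2*n+2" unfolding dw by (simp del: upt_Suc)
    show "num_down (take k (dword n R)) \<le> num_up (take k (dword n R))"
    proof (cases "k = 0")
      case True then show ?thesis by (simp add: num_up_def num_down_def)
    next
      case False
      show ?thesis
      proof (cases "k = 2*n+2")
        case True
        then have "take k (dword n R) = dword n R" unfolding dw by simp
        then show ?thesis using up dn by simp
      next
        case False2: False
        define m where "m = k - 1"
        have m: "k = Suc m" "m \<le> 2*n" using False False2 kl unfolding m_def by auto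
        have tk: "take k (dword n R) = True # map P [1..<k]"
        proof -
          have l: "length (map P [1..<2*n+1]) = 2*n" by simp
          have "take k (dword n R) = True # take m (map P [1..<2*n+1] @ [False])"
            unfolding dw using m by (simp del: upt_Suc)
          also have "take m (map P [1..<2*n+1] @ [False]) = take m (map P [1..<2*n+1])"
            using m l by (simp del: upt_Suc)
          also have "\<dots> = map P (take m [1..<2*n+1])" by (simp only: take_map)
          also have "take m [1..<2*n+1] = [1..<1+m]" using m by (simp del: upt_Suc)
          finally show ?thesis using m by simp
        qed
        have e: "C \<inter> {1..<k} = C \<inter> {1..m}" using m by auto
        have "num_up (take k (dword n R)) = 1 + card (C \<inter> {1..m})"
          unfolding tk num_up_def using cnt_up e by simp
        moreover have "num_down (take k (dword n R)) = m - card (C \<inter> {1..m})"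
          unfolding tk num_down_def using cnt_dn[of k] e m by (simp add: comp_def)
        ultimately show ?thesis using key[OF m(2)] by linarith
      qed
    qed
  qed
  have len: "length (dword n R) = 2 * (n+1)" unfolding dw by (simp del: upt_Suc)
  show ?thesis using pref up dn len unfolding dyck_path_def by simp
qed

end
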